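(* Let $n$ be divisible by $4$, $m=n/4$, let $(\Pi_0,\Pi_1)$ be a neat, ordered, balanced partition of $Z$, and let $R=S\times T$ be a $(\Pi_0,\Pi_1)$-rectangle. Then \[ \big||R\cap A|-|R\cap B|\big|\le 2^{10m/3}. \]
   Context: $X=\{x_1,\dots,x_n\}$, $Y=\{y_1,\dots,y_n\}$, $Z=X\cup Y$, $z_i=x_i$ ($i\in[n]$), $z_i=y_{i-n}$ ($i\in[n+1,2n]$), $Z[i,j]=\{z_\ell:i\le\ell\le j\}$. A partition $(\Pi_0,\Pi_1)$ of $Z$ is ordered if $\Pi_\ell=Z[i,j]$ for some interval $[i,j]$ and some $\ell\in\{0,1\}$; balanced if $2n/3\le|\Pi_0|,|\Pi_1|\le 4n/3$. A $(\Pi_0,\Pi_1)$-rectangle is $S\times T=\{U\cup V:U\in S,V\in T\}$ with $S\subseteq\mathcal{P}(\Pi_0)$, $T\subseteq\mathcal{P}(\Pi_1)$. Intervals $I_k=Z[4(k-1)+1,4k]$, $k\in[2m]$; neat means each $I_k\subseteq\Pi_0$ or $I_k\subseteq\Pi_1$. $\mathcal{L}=\{U\subseteq Z: |U\cap I_k|=1\ \forall k\in[2m]\}$. $A=\{U\in\mathcal{L}: |\{i\in[n]: x_i,y_i\in U\}| \text{ odd}\}$, $B=\mathcal{L}\setminus A$. *)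

theory Defs
  imports Complex_Main
begin

text \<open>Encoding: the ground set Z = X \<union> Y is represented by its indices {1..2n}:
  index i \<in> [1,n] stands for x_i = z_i, index i \<in> [n+1,2n] stands for y_(i-n) = z_i.\<close>

definition Zset :: "nat \<Rightarrow> nat set" where
  "Zset n = {1..2*n}"

definition Zint :: "nat \<Rightarrow> nat \<Rightarrow> nat \<Rightarrow> nat set" where
  "Zint n i j = {l \<in> Zset n. i \<le> l \<and> l \<le> j}"

definition is_partition :: "nat \<Rightarrow> nat set \<Rightarrow> nat set \<Rightarrow> bool" where
  "is_partition n P0 P1 \<longleftrightarrow> P0 \<union> P1 = Zset n \<and> P0 \<inter> P1 = {}"

definition ordered_partition :: "nat \<Rightarrow> nat set \<Rightarrow> nat set \<Rightarrow> bool" where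
  "ordered_partition n P0 P1 \<longleftrightarrow> is_partition n P0 P1 \<and>
     (\<exists>i j. P0 = Zint n i j \<or> P1 = Zint n i j)"

definition balanced_partition :: "nat \<Rightarrow> nat set \<Rightarrow> nat set \<Rightarrow> bool" where
  "balanced_partition n P0 P1 \<longleftrightarrow> is_partition n P0 P1 \<and>
     2 * real n / 3 \<le> real (card P0) \<and> real (card P0) \<le> 4 * real n / 3 \<and>
     2 * real n / 3 \<le> real (card P1) \<and> real (card P1) \<le> 4 * real n / 3"

definition Iblock :: "nat \<Rightarrow> nat \<Rightarrow> nat set" where
  "Iblock n k = Zint n (4*(k-1)+1) (4*k)"

definition neat_partition :: "nat \<Rightarrow> nat \<Rightarrow> nat set \<Rightarrow> nat set \<Rightarrow> bool" where
  "neat_partition n m P0 P1 \<longleftrightarrow> is_partition n P0 P1 \<and>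
     (\<forall>k\<in>{1..2*m}. Iblock n k \<subseteq> P0 \<or> Iblock n k \<subseteq> P1)"

definition rectangle :: "nat set \<Rightarrow> nat set \<Rightarrow> nat set set \<Rightarrow> bool" where
  "rectangle P0 P1 R \<longleftrightarrow> (\<exists>S T. S \<subseteq> Pow P0 \<and> T \<subseteq> Pow P1 \<and>
     R = {U \<union> V | U V. U \<in> S \<and> V \<in> T})"

definition Lset :: "nat \<Rightarrow> nat \<Rightarrow> nat set set" where
  "Lset n m = {U. U \<subseteq> Zset n \<and> (\<forall>k\<in>{1..2*m}. card (U \<inter> Iblock n k) = 1)}"

definition Aset :: "nat \<Rightarrow> nat \<Rightarrow> nat set set" where
  "Aset n m = {U \<in> Lset n m. odd (card {i \<in> {1..n}. i \<in> U \<and> n + i \<in> U})}"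

definition Bset :: "nat \<Rightarrow> nat \<Rightarrow> nat set set" where
  "Bset n m = Lset n m - Aset n m"

end

theory Submission
  imports Defs "HOL-Analysis.Convex" "HOL-Library.FuncSet"
begin

definition blk :: "nat \<Rightarrow> nat" where "blk l = (l + 3) div 4"

locale blocks =
  fixes n m :: nat
  assumes n_def: "n = 4*m"
begin

lemma Ib_eq: "k \<in> {1..2*m} \<Longrightarrow> Iblock n k = {4*k-3..4*k}"
  unfolding Iblock_def Zint_def Zset_def using n_def by auto

lemma Ib_iff: "k \<in> {1..2*m} \<Longrightarrow> l \<in> Iblock n k \<longleftrightarrow> l \<in> {1..2*n} \<and> blk l = k"
  unfolding Ib_eq blk_def using n_def by auto

lemma Ib_card: "k \<in> {1..2*m} \<Longrightarrow> card (Iblock n k) = 4"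
  unfolding Ib_eq by auto

lemma Ib_fin: "finite (Iblock n k)"
  unfolding Iblock_def Zint_def Zset_def by auto

lemma Ib_sub: "Iblock n k \<subseteq> Zset n"
  unfolding Iblock_def Zint_def by auto

lemma Z_blk: "l \<in> Zset n \<Longrightarrow> blk l \<in> {1..2*m} \<and> l \<in> Iblock n (blk l)"
proof -
  assume l: "l \<in> Zset n"
  have "blk l \<in> {1..2*m}" using l n_def unfolding Zset_def blk_def by auto
  then show ?thesis using Ib_iff l unfolding Zset_def by auto
qed

lemma Ib_ne: "k \<in> {1..2*m} \<Longrightarrow> 4*k \<in> Iblock n k"
  unfolding Ib_eq by auto

lemma blk_shift: "blk (n + i) = blk i + m"
  unfolding blk_def n_def by auto

definition cnt :: "nat set \<Rightarrow> nat" where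
  "cnt W = card {i\<in>{1..n}. i \<in> W \<and> n + i \<in> W}"
definition cp :: "(nat \<Rightarrow> nat) \<Rightarrow> nat" where
  "cp f = card {k\<in>{1..m}. f (k+m) = f k + n}"

abbreviation "PF \<equiv> PiE {1..2*m} (Iblock n)"

lemma PF_blk: "f \<in> PF \<Longrightarrow> k \<in> {1..2*m} \<Longrightarrow> blk (f k) = k \<and> f k \<in> Zset n"
  using Ib_iff[of k "f k"] unfolding Zset_def by auto

lemma img_Ib: "f \<in> PF \<Longrightarrow> k \<in> {1..2*m} \<Longrightarrow> f ` {1..2*m} \<inter> Iblock n k = {f k}"
proof -
  assume f: "f \<in> PF" and k: "k \<in> {1..2*m}"
  have "x = f k" if x1: "x \<in> f ` {1..2*m}" and x2: "x \<in> Iblock n k" for x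
  proof -
    obtain k' where k': "k' \<in> {1..2*m}" "x = f k'" using x1 by blast
    have "blk x = k'" using PF_blk[OF f k'(1)] k' by auto
    moreover have "blk x = k" using Ib_iff[OF k] x2 by auto
    ultimately show ?thesis using k' by auto
  qed
  moreover have "f k \<in> Iblock n k" using f k by auto
  ultimately show ?thesis using k by auto
qed

lemma in_L: "f \<in> PF \<Longrightarrow> f ` {1..2*m} \<in> Lset n m"
  unfolding Lset_def using img_Ib PF_blk by auto

lemma inj_img: "inj_on (\<lambda>f. f ` {1..2*m}) PF"
proof (rule inj_onI)
  fix f g assume f: "f \<in> PF" and g: "g \<in> PF" and e: "f ` {1..2*m} = g ` {1..2*m}"
  show "f = g"
  proof (rule PiE_ext[OF f g])
    fix k assume k: "k \<in> {1..2*m}"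
    show "f k = g k" using img_Ib[OF f k] img_Ib[OF g k] e by auto
  qed
qed

lemma L_repr: "W \<in> Lset n m \<Longrightarrow> \<exists>f\<in>PF. W = f ` {1..2*m}"
proof -
  assume W: "W \<in> Lset n m"
  define f where "f = (\<lambda>k\<in>{1..2*m}. THE x. x \<in> W \<inter> Iblock n k)"
  have fk: "W \<inter> Iblock n k = {f k}" if k: "k \<in> {1..2*m}" for k
  proof -
    have "card (W \<inter> Iblock n k) = 1" using W k unfolding Lset_def by auto
    then obtain x where x: "W \<inter> Iblock n k = {x}" by (auto simp: card_1_singleton_iff)
    have "f k = x" unfolding f_def using k x by auto
    then show ?thesis using x by auto
  qed
  have "f \<in> PF"
  proof -
    have "f k \<in> Iblock n k" if "k \<in> {1..2*m}" for k using fk[OF that] by blast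
    then show ?thesis unfolding f_def by auto
  qed
  moreover have "W = f ` {1..2*m}"
  proof
    show "f ` {1..2*m} \<subseteq> W" using fk by blast
    show "W \<subseteq> f ` {1..2*m}"
    proof
      fix x assume x: "x \<in> W"
      then have "x \<in> Zset n" using W unfolding Lset_def by auto
      then have "blk x \<in> {1..2*m}" "x \<in> Iblock n (blk x)" using Z_blk by auto
      then show "x \<in> f ` {1..2*m}" using fk x by blast
    qed
  qed
  ultimately show ?thesis by auto
qed

lemma cnt_cp: "f \<in> PF \<Longrightarrow> cnt (f ` {1..2*m}) = cp f"
proof -
  assume f: "f \<in> PF"
  have inj: "inj_on f {1..2*m}" using PF_blk[OF f] by (metis inj_onI)
  have "{i\<in>{1..n}. i \<in> f ` {1..2*m} \<and> n + i \<in> f ` {1..2*m}} = f ` {k\<in>{1..m}. f (k+m) = f k + n}"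
  proof
    show "f ` {k\<in>{1..m}. f (k+m) = f k + n} \<subseteq> {i\<in>{1..n}. i \<in> f ` {1..2*m} \<and> n + i \<in> f ` {1..2*m}}"
    proof
      fix i assume "i \<in> f ` {k\<in>{1..m}. f (k+m) = f k + n}"
      then obtain k where k: "k \<in> {1..m}" "f (k+m) = f k + n" "i = f k" by auto
      have "k \<in> {1..2*m}" using k by auto
      then have "f k \<in> {4*k-3..4*k}" using PiE_mem[OF f] Ib_eq[of k] by auto
      then have "i \<in> {1..n}" using k n_def by auto
      moreover have "i \<in> f ` {1..2*m}" using k by auto
      moreover have "n + i \<in> f ` {1..2*m}" using k by (auto intro!: image_eqI[of _ _ "k+m"])
      ultimately show "i \<in> {i\<in>{1..n}. i \<in> f ` {1..2*m} \<and> n + i \<in> f ` {1..2*m}}" by auto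
    qed
    show "{i\<in>{1..n}. i \<in> f ` {1..2*m} \<and> n + i \<in> f ` {1..2*m}} \<subseteq> f ` {k\<in>{1..m}. f (k+m) = f k + n}"
    proof
      fix i assume i: "i \<in> {i\<in>{1..n}. i \<in> f ` {1..2*m} \<and> n + i \<in> f ` {1..2*m}}"
      then obtain k k' where k: "k \<in> {1..2*m}" "i = f k" and k': "k' \<in> {1..2*m}" "n + i = f k'" by auto
      have bk: "blk i = k" using PF_blk[OF f k(1)] k by auto
      have "blk (n+i) = k'" using PF_blk[OF f k'(1)] k' by auto
      then have "k' = k + m" using bk blk_shift by auto
      moreover have "k \<le> m" using bk i n_def unfolding blk_def by auto
      ultimately show "i \<in> f ` {k\<in>{1..m}. f (k+m) = f k + n}" using k k' by auto
    qed
  qed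
  moreover have "inj_on f {k\<in>{1..m}. f (k+m) = f k + n}" by (rule inj_on_subset[OF inj]) auto
  ultimately show ?thesis unfolding cnt_def cp_def by (simp add: card_image)
qed

end



locale part = blocks +
  fixes P0 P1 :: "nat set"
  assumes un: "P0 \<union> P1 = Zset n" and dj: "P0 \<inter> P1 = {}"
    and neat: "\<forall>k\<in>{1..2*m}. Iblock n k \<subseteq> P0 \<or> Iblock n k \<subseteq> P1"
begin

definition "K0 = {k\<in>{1..2*m}. Iblock n k \<subseteq> P0}"
definition "K1 = {k\<in>{1..2*m}. Iblock n k \<subseteq> P1}"

lemma K_iff: "k \<in> {1..2*m} \<Longrightarrow> l \<in> Iblock n k \<Longrightarrow> (l \<in> P0 \<longleftrightarrow> k \<in> K0) \<and> (l \<in> P1 \<longleftrightarrow> k \<in> K1)"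
proof -
  assume k: "k \<in> {1..2*m}" and l: "l \<in> Iblock n k"
  consider "Iblock n k \<subseteq> P0" | "Iblock n k \<subseteq> P1" using neat k by blast
  then show ?thesis
  proof cases
    case 1
    then have "l \<in> P0" "l \<notin> P1" using l dj by auto
    moreover have "k \<notin> K1" using 1 l dj unfolding K1_def by auto
    ultimately show ?thesis using 1 k unfolding K0_def by auto
  next
    case 2
    then have "l \<in> P1" "l \<notin> P0" using l dj by auto
    moreover have "k \<notin> K0" using 2 l dj unfolding K0_def by auto
    ultimately show ?thesis using 2 k unfolding K1_def by auto
  qed
qed

lemma K0_sub: "K0 \<subseteq> {1..2*m}" unfolding K0_def by auto
lemma K1_sub: "K1 \<subseteq> {1..2*m}" unfolding K1_def by auto

lemma K1_eq: "K1 = {1..2*m} - K0"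
proof -
  have A: "k \<in> K1 \<longleftrightarrow> k \<notin> K0" if k: "k \<in> {1..2*m}" for k
  proof -
    have e: "(4*k \<in> P0 \<longleftrightarrow> k \<in> K0) \<and> (4*k \<in> P1 \<longleftrightarrow> k \<in> K1)" using K_iff[OF k Ib_ne[OF k]] .
    have "4*k \<in> Zset n" using Ib_sub Ib_ne[OF k] by blast
    then have "4*k \<in> P0 \<or> 4*k \<in> P1" "\<not> (4*k \<in> P0 \<and> 4*k \<in> P1)" using un dj by auto
    then show ?thesis using e by blast
  qed
  show ?thesis
  proof (rule set_eqI)
    fix k show "k \<in> K1 \<longleftrightarrow> k \<in> {1..2*m} - K0"
      using A[of k] K1_sub by (cases "k \<in> {1..2*m}") auto
  qed
qed

lemma finK: "finite K0" "finite K1" using K0_sub K1_sub finite_subset by auto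

lemma P0_eq: "P0 = (\<Union>k\<in>K0. Iblock n k)"
proof
  show "(\<Union>k\<in>K0. Iblock n k) \<subseteq> P0" unfolding K0_def by auto
  show "P0 \<subseteq> (\<Union>k\<in>K0. Iblock n k)"
  proof
    fix l assume l: "l \<in> P0"
    then have "l \<in> Zset n" using un by auto
    then have "blk l \<in> {1..2*m}" "l \<in> Iblock n (blk l)" using Z_blk by auto
    then show "l \<in> (\<Union>k\<in>K0. Iblock n k)" using K_iff l by blast
  qed
qed

lemma card_UIb: "K \<subseteq> {1..2*m} \<Longrightarrow> card (\<Union>k\<in>K. Iblock n k) = 4 * card K"
proof -
  assume K: "K \<subseteq> {1..2*m}"
  have fin: "finite K" using K finite_subset by auto
  have "card (\<Union>k\<in>K. Iblock n k) = (\<Sum>k\<in>K. card (Iblock n k))"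
  proof (rule card_UN_disjoint[OF fin])
    show "\<forall>i\<in>K. finite (Iblock n i)" using Ib_fin by auto
    show "\<forall>i\<in>K. \<forall>j\<in>K. i \<noteq> j \<longrightarrow> Iblock n i \<inter> Iblock n j = {}"
    proof (intro ballI impI)
      fix i j assume ij: "i \<in> K" "j \<in> K" "i \<noteq> j"
      show "Iblock n i \<inter> Iblock n j = {}"
      proof (rule ccontr)
        assume "Iblock n i \<inter> Iblock n j \<noteq> {}"
        then obtain x where "x \<in> Iblock n i" "x \<in> Iblock n j" by blast
        then have "blk x = i" "blk x = j" using Ib_iff ij K by blast+
        then show False using ij by simp
      qed
    qed
  qed
  also have "\<dots> = (\<Sum>k\<in>K. 4)" using Ib_card K by (intro sum.cong) auto
  finally show ?thesis by simp
qed

lemma cardP0: "card P0 = 4 * card K0"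
  using card_UIb[OF K0_sub] P0_eq by simp

lemma cardK: "card K0 + card K1 = 2*m"
proof -
  have "card K1 = card {1..2*m} - card K0" unfolding K1_eq using K0_sub by (simp add: card_Diff_subset finK)
  moreover have "card K0 \<le> card {1..2*m}" using card_mono[OF _ K0_sub] by simp
  ultimately show ?thesis by simp
qed

definition mg :: "(nat \<Rightarrow> nat) \<Rightarrow> (nat \<Rightarrow> nat) \<Rightarrow> nat \<Rightarrow> nat" where
  "mg g h = (\<lambda>k. if k \<in> K0 then g k else h k)"

abbreviation "G0 \<equiv> PiE K0 (Iblock n)"
abbreviation "H0 \<equiv> PiE K1 (Iblock n)"

lemma mg_PF: "g \<in> G0 \<Longrightarrow> h \<in> H0 \<Longrightarrow> mg g h \<in> PF"
proof -
  assume g: "g \<in> G0" and h: "h \<in> H0"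
  have "mg g h k \<in> Iblock n k" if "k \<in> {1..2*m}" for k
  proof (cases "k \<in> K0")
    case True then show ?thesis using PiE_mem[OF g True] unfolding mg_def by simp
  next
    case False then have "k \<in> K1" unfolding K1_eq using that by auto
    then show ?thesis using PiE_mem[OF h] False unfolding mg_def by simp
  qed
  moreover have "mg g h k = undefined" if "k \<notin> {1..2*m}" for k
  proof -
    have "k \<notin> K0" "k \<notin> K1" using that K0_sub K1_sub by auto
    then show ?thesis using PiE_arb[OF h] unfolding mg_def by simp
  qed
  ultimately show ?thesis by (auto simp: PiE_iff extensional_def)
qed

lemma mg_img: "mg g h ` {1..2*m} = g ` K0 \<union> h ` K1"
  unfolding mg_def K1_eq using K0_sub by auto

lemma mg_inj: "inj_on (\<lambda>(g,h). mg g h) (G0 \<times> H0)"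
proof (rule inj_onI, clarify)
  fix g h g' h' assume a: "g \<in> G0" "h \<in> H0" "g' \<in> G0" "h' \<in> H0" "mg g h = mg g' h'"
  have "g = g'"
  proof (rule PiE_ext[OF a(1) a(3)])
    fix i assume "i \<in> K0" then show "g i = g' i" using fun_cong[OF a(5), of i] unfolding mg_def by auto
  qed
  moreover have "h = h'"
  proof (rule PiE_ext[OF a(2) a(4)])
    fix i assume "i \<in> K1" then have "i \<notin> K0" unfolding K1_eq by auto
    then show "h i = h' i" using fun_cong[OF a(5), of i] unfolding mg_def by auto
  qed
  ultimately show "g = g' \<and> h = h'" by simp
qed

lemma reduce:
  assumes S: "S \<subseteq> Pow P0" and T: "T \<subseteq> Pow P1" and R: "R = {U \<union> V | U V. U \<in> S \<and> V \<in> T}"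
  defines "G \<equiv> {g\<in>G0. g ` K0 \<in> S}" and "H \<equiv> {h\<in>H0. h ` K1 \<in> T}"
  shows "R \<inter> Lset n m = (\<lambda>(g,h). mg g h ` {1..2*m}) ` (G \<times> H)"
    and "inj_on (\<lambda>(g,h). mg g h ` {1..2*m}) (G \<times> H)"
proof -
  have GH: "G \<times> H \<subseteq> G0 \<times> H0" unfolding G_def H_def by auto
  have "inj_on ((\<lambda>f. f ` {1..2*m}) \<circ> (\<lambda>(g,h). mg g h)) (G0 \<times> H0)"
  proof (rule comp_inj_on[OF mg_inj])
    show "inj_on (\<lambda>f. f ` {1..2*m}) ((\<lambda>(g,h). mg g h) ` (G0 \<times> H0))"
    proof (rule inj_on_subset[OF inj_img])
      show "(\<lambda>(g,h). mg g h) ` (G0 \<times> H0) \<subseteq> PF"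
      proof
        fix f assume "f \<in> (\<lambda>(g,h). mg g h) ` (G0 \<times> H0)"
        then obtain g h where gh: "g \<in> G0" "h \<in> H0" "f = mg g h" by auto
        show "f \<in> PF" unfolding gh(3) by (rule mg_PF[OF gh(1,2)])
      qed
    qed
  qed
  then show "inj_on (\<lambda>(g,h). mg g h ` {1..2*m}) (G \<times> H)"
    using inj_on_subset[OF _ GH] by (simp add: comp_def case_prod_beta')
  show "R \<inter> Lset n m = (\<lambda>(g,h). mg g h ` {1..2*m}) ` (G \<times> H)"
  proof
    show "(\<lambda>(g,h). mg g h ` {1..2*m}) ` (G \<times> H) \<subseteq> R \<inter> Lset n m"
    proof clarify
      fix g h assume g: "g \<in> G" and h: "h \<in> H"
      have "g \<in> G0" "h \<in> H0" using g h unfolding G_def H_def by auto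
      then have "mg g h ` {1..2*m} \<in> Lset n m" by (intro in_L mg_PF)
      moreover have "g ` K0 \<in> S" "h ` K1 \<in> T" using g h unfolding G_def H_def by auto
      then have "mg g h ` {1..2*m} \<in> R" unfolding mg_img R by blast
      ultimately show "mg g h ` {1..2*m} \<in> R \<inter> Lset n m" by simp
    qed
    show "R \<inter> Lset n m \<subseteq> (\<lambda>(g,h). mg g h ` {1..2*m}) ` (G \<times> H)"
    proof
      fix W assume W: "W \<in> R \<inter> Lset n m"
      then obtain U V where UV: "W = U \<union> V" "U \<in> S" "V \<in> T" using R by blast
      obtain f where f: "f \<in> PF" "W = f ` {1..2*m}" using L_repr W by blast
      have U: "U \<subseteq> P0" and V: "V \<subseteq> P1" using UV S T by auto
      have fP: "f k \<in> P0 \<longleftrightarrow> k \<in> K0" "f k \<in> P1 \<longleftrightarrow> k \<in> K1" if "k \<in> {1..2*m}" for k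
        using K_iff[OF that PiE_mem[OF f(1) that]] by auto
      have "U = W \<inter> P0" using U V dj UV(1) by blast
      also have "\<dots> = f ` {k\<in>{1..2*m}. f k \<in> P0}" unfolding f(2) by blast
      also have "{k\<in>{1..2*m}. f k \<in> P0} = K0" using fP K0_sub by blast
      finally have Ueq: "U = f ` K0" .
      have "V = W \<inter> P1" using U V dj UV(1) by blast
      also have "\<dots> = f ` {k\<in>{1..2*m}. f k \<in> P1}" unfolding f(2) by blast
      also have "{k\<in>{1..2*m}. f k \<in> P1} = K1" using fP K1_sub by blast
      finally have Veq: "V = f ` K1" .
      define g where "g = restrict f K0"
      define h where "h = restrict f K1"
      have gG: "g \<in> G" unfolding G_def g_def using f(1) K0_sub UV(2) Ueq by auto
      have hH: "h \<in> H" unfolding H_def h_def using f(1) K1_sub UV(3) Veq by auto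
      have "mg g h = f"
      proof (rule PiE_ext[OF mg_PF f(1)])
        show "g \<in> G0" "h \<in> H0" using gG hH unfolding G_def H_def by auto
        show "mg g h i = f i" if "i \<in> {1..2*m}" for i
          using that unfolding mg_def g_def h_def K1_eq by auto
      qed
      then show "W \<in> (\<lambda>(g,h). mg g h ` {1..2*m}) ` (G \<times> H)" unfolding f(2)
        using gG hH by (intro image_eqI[of _ _ "(g,h)"]) auto
    qed
  qed
qed

end


lemma sum_two_neg:
  fixes A :: "'a set"
  assumes "finite A" "x \<in> A" "y \<in> A" "x \<noteq> y" "card A = 4"
  shows "(\<Sum>a\<in>A. (if a = x then -1 else 1) * (if a = y then -1 else (1::real))) = 0"
proof -
  let ?f = "\<lambda>a. (if a = x then -1 else 1) * (if a = y then -1 else (1::real))"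
  have A1: "sum ?f A = ?f x + sum ?f (A - {x})" using assms by (simp add: sum.remove)
  have A2: "sum ?f (A - {x}) = ?f y + sum ?f (A - {x} - {y})" using assms by (intro sum.remove) auto
  have A3: "sum ?f (A - {x} - {y}) = sum (\<lambda>a. 1) (A - {x} - {y})" by (intro sum.cong) auto
  have "card (A - {x} - {y}) = 2" using assms by (simp add: card_Diff_subset)
  then show ?thesis using A1 A2 A3 assms by simp
qed

context part
begin

definition "Sp = {k\<in>{1..m}. (k \<in> K0) \<noteq> (k+m \<in> K0)}"
definition "pp k = (if k \<in> K0 then k else k+m)"
definition "qq k = (if k \<in> K0 then k+m else k)"
definition D :: "(nat \<Rightarrow> nat) \<Rightarrow> real" where "D f = (-1) ^ cp f"

lemma Sp_pos: "k \<in> Sp \<Longrightarrow> pp k \<in> K0 \<and> qq k \<in> K1 \<and> k \<in> {1..m}"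
  unfolding Sp_def pp_def qq_def K1_eq by auto

lemma card_PiE4: "K \<subseteq> {1..2*m} \<Longrightarrow> card (PiE K (Iblock n)) = 4 ^ card K"
proof -
  assume K: "K \<subseteq> {1..2*m}"
  have "finite K" using K finite_subset by auto
  then have "card (PiE K (Iblock n)) = (\<Prod>k\<in>K. card (Iblock n k))" by (rule card_PiE)
  also have "\<dots> = (\<Prod>k\<in>K. 4)" using K Ib_card by (intro prod.cong) auto
  finally show ?thesis by simp
qed

lemma cp_split:
  assumes k0: "k0 \<in> {1..m}"
  shows "D f = (if f (k0+m) = f k0 + n then -1 else 1) * (-1) ^ card {k\<in>{1..m}-{k0}. f (k+m) = f k + n}"
proof -
  let ?P = "\<lambda>k. f (k+m) = f k + n"
  have fin: "finite {k\<in>{1..m}-{k0}. ?P k}" by auto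
  show ?thesis
  proof (cases "?P k0")
    case True
    then have "{k\<in>{1..m}. ?P k} = insert k0 {k\<in>{1..m}-{k0}. ?P k}" using k0 by auto
    then have "cp f = Suc (card {k\<in>{1..m}-{k0}. ?P k})" unfolding cp_def using fin by simp
    then show ?thesis unfolding D_def using True by simp
  next
    case False
    then have "{k\<in>{1..m}. ?P k} = {k\<in>{1..m}-{k0}. ?P k}" using k0 by auto
    then show ?thesis unfolding D_def cp_def using False by simp
  qed
qed

lemma cpr_upd:
  assumes "j0 = k0 \<or> j0 = k0 + m" "k0 \<in> {1..m}"
  shows "card {k\<in>{1..m}-{k0}. (f(j0:=a)) (k+m) = (f(j0:=a)) k + n} = card {k\<in>{1..m}-{k0}. f (k+m) = f k + n}"
proof -
  have "{k\<in>{1..m}-{k0}. (f(j0:=a)) (k+m) = (f(j0:=a)) k + n} = {k\<in>{1..m}-{k0}. f (k+m) = f k + n}"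
    using assms by auto
  then show ?thesis by simp
qed

lemma mg_upd: "j \<in> K0 \<Longrightarrow> mg (g(j:=a)) h = (mg g h)(j:=a)"
  unfolding mg_def by auto

lemma KL:
  assumes h: "h \<in> H0" and h': "h' \<in> H0" and k0: "k0 \<in> Sp" and ne: "h (qq k0) \<noteq> h' (qq k0)"
  shows "(\<Sum>g\<in>G0. D (mg g h) * D (mg g h')) = 0"
proof -
  define j0 where "j0 = pp k0"
  have j0: "j0 \<in> K0" using Sp_pos k0 j0_def by auto
  have k0m: "k0 \<in> {1..m}" using Sp_pos k0 by auto
  have j0k: "j0 = k0 \<or> j0 = k0+m" unfolding j0_def pp_def by auto
  have sp: "(k0 \<in> K0) \<noteq> (k0+m \<in> K0)" using k0 unfolding Sp_def by auto
  define K' where "K' = K0 - {j0}"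
  have KK: "K0 = insert j0 K'" "j0 \<notin> K'" using j0 K'_def by auto
  define rel where "rel a c \<longleftrightarrow> (if k0 \<in> K0 then c = a + n else a = c + n)" for a c
  define cr where "cr f = card {k\<in>{1..m}-{k0}. f (k+m) = f k + n}" for f
  have key: "D ((mg g hh)(j0:=a)) = (if rel a (hh (qq k0)) then -1 else 1) * (-1)^cr (mg g hh)" for g a hh
  proof -
    have "((mg g hh)(j0:=a)) (k0+m) = ((mg g hh)(j0:=a)) k0 + n \<longleftrightarrow> rel a (hh (qq k0))"
    proof (cases "k0 \<in> K0")
      case True
      then have "j0 = k0" "qq k0 = k0+m" "k0+m \<notin> K0" "k0 \<noteq> k0+m" using sp k0m unfolding j0_def pp_def qq_def by auto
      then show ?thesis unfolding rel_def mg_def using True by auto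
    next
      case False
      then have "j0 = k0+m" "qq k0 = k0" "k0 \<noteq> k0+m" using sp k0m unfolding j0_def pp_def qq_def by auto
      then show ?thesis unfolding rel_def mg_def using False by auto
    qed
    then show ?thesis using cp_split[OF k0m, of "(mg g hh)(j0:=a)"] cpr_upd[OF j0k k0m] unfolding cr_def by simp
  qed
  define psi where "psi a = (if rel a (h (qq k0)) then -1 else 1) * (if rel a (h' (qq k0)) then -1 else (1::real))" for a
  define Q where "Q g = (-1::real)^cr (mg g h) * (-1)^cr (mg g h')" for g
  have "(\<Sum>g\<in>G0. D (mg g h) * D (mg g h')) =
      (\<Sum>x\<in>Iblock n j0 \<times> PiE K' (Iblock n). (\<lambda>g. D (mg g h) * D (mg g h')) ((\<lambda>(y, g). g(j0 := y)) x))"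
    unfolding KK(1) PiE_insert_eq by (rule sum.reindex[OF inj_combinator[OF KK(2)], unfolded comp_def])
  also have "\<dots> = (\<Sum>x\<in>Iblock n j0 \<times> PiE K' (Iblock n). psi (fst x) * Q (snd x))"
  proof (rule sum.cong[OF refl], clarify)
    fix a g assume "a \<in> Iblock n j0" "g \<in> PiE K' (Iblock n)"
    show "D (mg (g(j0:=a)) h) * D (mg (g(j0:=a)) h') = psi (fst (a,g)) * Q (snd (a,g))"
      unfolding mg_upd[OF j0] key psi_def Q_def by simp
  qed
  also have "\<dots> = (\<Sum>a\<in>Iblock n j0. psi a) * (\<Sum>g\<in>PiE K' (Iblock n). Q g)"
    by (simp add: sum_product sum.cartesian_product case_prod_beta')
  also have "(\<Sum>a\<in>Iblock n j0. psi a) = 0"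
  proof -
    define ab where "ab c = (if k0 \<in> K0 then c - n else c + n)" for c
    have j0r: "j0 \<in> {1..2*m}" "qq k0 \<in> {1..2*m}" using j0 K0_sub Sp_pos[OF k0] K1_sub by auto
    have bI: "h (qq k0) \<in> Iblock n (qq k0)" "h' (qq k0) \<in> Iblock n (qq k0)"
      using PiE_mem[OF h] PiE_mem[OF h'] Sp_pos[OF k0] by auto
    have relI: "rel a c \<longleftrightarrow> a = ab c" "ab c \<in> Iblock n j0"
      if "a \<in> Iblock n j0" "c \<in> Iblock n (qq k0)" for a c
    proof -
      show "rel a c \<longleftrightarrow> a = ab c" "ab c \<in> Iblock n j0"
      proof (atomize(full), cases "k0 \<in> K0")
        case True
        then have "j0 = k0" "qq k0 = k0+m" using sp unfolding j0_def pp_def qq_def by auto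
        then show "(rel a c \<longleftrightarrow> a = ab c) \<and> ab c \<in> Iblock n j0"
          using that True k0m Ib_eq[OF j0r(1)] Ib_eq[OF j0r(2)] n_def unfolding rel_def ab_def by auto
      next
        case False
        then have "j0 = k0+m" "qq k0 = k0" using sp unfolding j0_def pp_def qq_def by auto
        then show "(rel a c \<longleftrightarrow> a = ab c) \<and> ab c \<in> Iblock n j0"
          using that False k0m Ib_eq[OF j0r(1)] Ib_eq[OF j0r(2)] n_def unfolding rel_def ab_def by auto
      qed
    qed
    have abne: "ab (h (qq k0)) \<noteq> ab (h' (qq k0))"
    proof (cases "k0 \<in> K0")
      case True
      then have "qq k0 = k0+m" using sp unfolding qq_def by auto
      then have "h (qq k0) \<ge> n" "h' (qq k0) \<ge> n" using bI Ib_eq[OF j0r(2)] n_def k0m by auto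
      then show ?thesis using ne True unfolding ab_def by auto
    next
      case False then show ?thesis using ne unfolding ab_def by auto
    qed
    have "(\<Sum>a\<in>Iblock n j0. psi a) = (\<Sum>a\<in>Iblock n j0. (if a = ab (h (qq k0)) then -1 else 1) * (if a = ab (h' (qq k0)) then -1 else (1::real)))"
      unfolding psi_def using relI bI by (intro sum.cong) auto
    also have "\<dots> = 0" using sum_two_neg[OF Ib_fin relI(2)[OF _ bI(1)] relI(2)[OF _ bI(2)] abne Ib_card[OF j0r(1)]]
      using Ib_ne[OF j0r(1)] by blast
    finally show ?thesis .
  qed
  finally show ?thesis by simp
qed

lemma D_abs: "\<bar>D f\<bar> = 1" unfolding D_def by simp

lemma finG0: "finite G0" "finite H0" using finK Ib_fin by (auto intro: finite_PiE)

definition "agr h h' \<longleftrightarrow> (\<forall>k\<in>Sp. h (qq k) = h' (qq k))"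

lemma inner_bound:
  assumes h: "h \<in> H0" and h': "h' \<in> H0"
  shows "(\<Sum>g\<in>G0. D (mg g h) * D (mg g h')) \<le> (if agr h h' then real (card G0) else 0)"
proof (cases "agr h h'")
  case True
  have "(\<Sum>g\<in>G0. D (mg g h) * D (mg g h')) \<le> (\<Sum>g\<in>G0. 1)"
  proof (rule sum_mono)
    fix g
    have "D (mg g h) * D (mg g h') \<le> \<bar>D (mg g h) * D (mg g h')\<bar>" by simp
    also have "\<dots> = 1" by (simp add: abs_mult D_abs)
    finally show "D (mg g h) * D (mg g h') \<le> 1" .
  qed
  then show ?thesis using True by simp
next
  case False
  then obtain k0 where "k0 \<in> Sp" "h (qq k0) \<noteq> h' (qq k0)" unfolding agr_def by auto
  then show ?thesis using KL[OF h h'] False by simp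
qed

lemma card_Sp_le: "card Sp \<le> card K1" and card_agr: "h \<in> H0 \<Longrightarrow> card {h'\<in>H0. agr h h'} \<le> 4 ^ (card K1 - card Sp)"
proof -
  define J where "J = qq ` Sp"
  have JK: "J \<subseteq> K1" unfolding J_def using Sp_pos by auto
  have injq: "inj_on qq Sp"
  proof (rule inj_onI)
    fix x y assume "x \<in> Sp" "y \<in> Sp" "qq x = qq y"
    then show "x = y" unfolding Sp_def qq_def by (auto split: if_splits)
  qed
  have cJ: "card J = card Sp" unfolding J_def using injq by (simp add: card_image)
  show "card Sp \<le> card K1" using card_mono[OF finK(2) JK] cJ by simp
  assume h: "h \<in> H0"
  let ?A = "{h'\<in>H0. agr h h'}"
  have inj: "inj_on (\<lambda>h'. restrict h' (K1 - J)) ?A"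
  proof (rule inj_onI)
    fix h1 h2 assume h1: "h1 \<in> ?A" and h2: "h2 \<in> ?A" and e: "restrict h1 (K1 - J) = restrict h2 (K1 - J)"
    show "h1 = h2"
    proof (rule PiE_ext)
      show "h1 \<in> H0" "h2 \<in> H0" using h1 h2 by auto
      fix i assume i: "i \<in> K1"
      show "h1 i = h2 i"
      proof (cases "i \<in> J")
        case True
        then obtain k where "k \<in> Sp" "i = qq k" unfolding J_def by auto
        then show ?thesis using h1 h2 unfolding agr_def by auto
      next
        case False
        then show ?thesis using fun_cong[OF e, of i] i by auto
      qed
    qed
  qed
  have sub: "(\<lambda>h'. restrict h' (K1 - J)) ` ?A \<subseteq> PiE (K1 - J) (Iblock n)"
    by (auto simp: restrict_PiE_iff)
  have "card ?A = card ((\<lambda>h'. restrict h' (K1 - J)) ` ?A)" using inj by (simp add: card_image)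
  also have "\<dots> \<le> card (PiE (K1 - J) (Iblock n))"
    by (rule card_mono[OF _ sub]) (use finK Ib_fin in \<open>auto intro: finite_PiE\<close>)
  also have "\<dots> = 4 ^ card (K1 - J)" using K1_sub by (intro card_PiE4) auto
  also have "card (K1 - J) = card K1 - card Sp" using cJ JK finK by (simp add: card_Diff_subset finite_subset)
  finally show "card ?A \<le> 4 ^ (card K1 - card Sp)" .
qed

lemma bound:
  assumes G: "G \<subseteq> G0" and H: "H \<subseteq> H0"
  shows "(\<Sum>g\<in>G. \<Sum>h\<in>H. D (mg g h))^2 \<le> 4^(card K0) * 4^(card K0) * 4^(card K1) * 4^(card K1 - card Sp)"
proof -
  define F where "F g = (\<Sum>h\<in>H. D (mg g h))" for g
  have finG: "finite G" "finite H" using finite_subset[OF G finG0(1)] finite_subset[OF H finG0(2)] by auto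
  have cG0: "card G0 = 4 ^ card K0" using K0_sub by (rule card_PiE4)
  have cH0: "card H0 = 4 ^ card K1" using K1_sub by (rule card_PiE4)
  have cG: "real (card G) \<le> 4 ^ card K0" using card_mono[OF finG0(1) G] cG0 by (simp flip: of_nat_le_iff)
  have cH: "real (card H) \<le> 4 ^ card K1" using card_mono[OF finG0(2) H] cH0 by (simp flip: of_nat_le_iff)
  have "(\<Sum>g\<in>G. F g)^2 \<le> (\<Sum>g\<in>G. (F g)^2) * card G" by (rule sum_squared_le_sum_of_squares)
  also have "(\<Sum>g\<in>G. (F g)^2) \<le> (\<Sum>g\<in>G0. (F g)^2)" by (rule sum_mono2[OF finG0(1) G]) auto
  also have "(\<Sum>g\<in>G0. (F g)^2) = (\<Sum>h\<in>H. \<Sum>h'\<in>H. \<Sum>g\<in>G0. D (mg g h) * D (mg g h'))"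
  proof -
    have "(\<Sum>g\<in>G0. (F g)^2) = (\<Sum>g\<in>G0. \<Sum>h\<in>H. \<Sum>h'\<in>H. D (mg g h) * D (mg g h'))"
      unfolding F_def power2_eq_square sum_product by simp
    also have "\<dots> = (\<Sum>h\<in>H. \<Sum>g\<in>G0. \<Sum>h'\<in>H. D (mg g h) * D (mg g h'))" by (rule sum.swap)
    also have "\<dots> = (\<Sum>h\<in>H. \<Sum>h'\<in>H. \<Sum>g\<in>G0. D (mg g h) * D (mg g h'))" by (intro sum.cong refl sum.swap)
    finally show ?thesis .
  qed
  also have "\<dots> \<le> (\<Sum>h\<in>H. \<Sum>h'\<in>H. (if agr h h' then real (card G0) else 0))"
    using H by (intro sum_mono inner_bound) auto
  also have "\<dots> = (\<Sum>h\<in>H. real (card G0) * card {h'\<in>H. agr h h'})"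
  proof (rule sum.cong[OF refl])
    fix h assume "h \<in> H"
    have "(\<Sum>h'\<in>H. (if agr h h' then real (card G0) else 0)) = (\<Sum>h'\<in>{h'\<in>H. agr h h'}. real (card G0))"
      using finG by (simp add: sum.inter_filter[symmetric])
    then show "(\<Sum>h'\<in>H. (if agr h h' then real (card G0) else 0)) = real (card G0) * card {h'\<in>H. agr h h'}" by simp
  qed
  also have "\<dots> \<le> (\<Sum>h\<in>H. real (card G0) * 4 ^ (card K1 - card Sp))"
  proof (rule sum_mono)
    fix h assume hH: "h \<in> H"
    have "card {h'\<in>H. agr h h'} \<le> card {h'\<in>H0. agr h h'}"
      using H finG0 by (intro card_mono) auto
    also have "\<dots> \<le> 4 ^ (card K1 - card Sp)" using card_agr hH H by auto
    finally have "real (card {h'\<in>H. agr h h'}) \<le> 4 ^ (card K1 - card Sp)" by (simp flip: of_nat_le_iff)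
    then show "real (card G0) * card {h'\<in>H. agr h h'} \<le> real (card G0) * 4 ^ (card K1 - card Sp)"
      by (intro mult_left_mono) auto
  qed
  also have "\<dots> = real (card H) * 4 ^ card K0 * 4 ^ (card K1 - card Sp)" using cG0 by simp
  finally have "(\<Sum>g\<in>G. F g)^2 \<le> (real (card H) * 4 ^ card K0 * 4 ^ (card K1 - card Sp)) * card G"
    by (simp add: mult_right_mono)
  also have "\<dots> \<le> (4 ^ card K1 * 4 ^ card K0 * 4 ^ (card K1 - card Sp)) * 4 ^ card K0"
    using cG cH by (intro mult_mono) auto
  finally show ?thesis unfolding F_def by (simp add: algebra_simps)
qed

end


definition spl :: "nat \<Rightarrow> nat set \<Rightarrow> nat set" where
  "spl m K = {k\<in>{1..m}. (k \<in> K) \<noteq> (k+m \<in> K)}"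

lemma spl_nopair:
  assumes K: "K \<subseteq> {1..2*m}" and np: "\<And>x. x \<in> K \<Longrightarrow> x + m \<notin> K"
  shows "card K \<le> card (spl m K)"
proof -
  define r where "r k = (if k \<le> m then k else k - m)" for k
  have inj: "inj_on r K"
  proof (rule inj_onI)
    fix a b assume a: "a \<in> K" and b: "b \<in> K" and e: "r a = r b"
    show "a = b"
    proof (rule ccontr)
      assume "a \<noteq> b"
      then have "a = b + m \<or> b = a + m" using e unfolding r_def by (auto split: if_splits)
      then show False using np a b by auto
    qed
  qed
  have sub: "r ` K \<subseteq> spl m K"
  proof
    fix y assume "y \<in> r ` K"
    then obtain k where k: "k \<in> K" "y = r k" by auto
    have kr: "1 \<le> k" "k \<le> 2*m" using K k by auto
    show "y \<in> spl m K"
    proof (cases "k \<le> m")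
      case True
      then show ?thesis using k kr np[OF k(1)] unfolding r_def spl_def by auto
    next
      case False
      then have "k - m \<notin> K" using np[of "k-m"] k by auto
      then show ?thesis using k kr False unfolding r_def spl_def by auto
    qed
  qed
  have "card K = card (r ` K)" using inj by (simp add: card_image)
  also have "\<dots> \<le> card (spl m K)" by (rule card_mono[OF _ sub]) (auto simp: spl_def)
  finally show ?thesis .
qed

lemma spl_compl: "K \<subseteq> {1..2*m} \<Longrightarrow> spl m ({1..2*m} - K) = spl m K"
  unfolding spl_def by auto

lemma spl_bound:
  fixes K :: "nat set"
  assumes K: "K \<subseteq> {1..2*m}" and conv: "\<And>x y z. x \<in> K \<Longrightarrow> y \<in> K \<Longrightarrow> x \<le> z \<Longrightarrow> z \<le> y \<Longrightarrow> z \<in> K"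
    and c1: "2*real m/3 \<le> card K" and c2: "card K \<le> 4*real m/3"
  shows "2 * real m / 3 \<le> card (spl m K)"
proof (cases "card K \<le> m")
  case True
  have "x + m \<notin> K" if x: "x \<in> K" for x
  proof
    assume xm: "x + m \<in> K"
    have "{x..x+m} \<subseteq> K" using conv[OF x xm] by auto
    then have "card {x..x+m} \<le> card K" using K by (intro card_mono) (auto intro: finite_subset)
    then show False using True by simp
  qed
  then have "card K \<le> card (spl m K)" using spl_nopair[OF K] by blast
  then show ?thesis using c1 by linarith
next
  case False
  define K' where "K' = {1..2*m} - K"
  have finK: "finite K" using K finite_subset by auto
  have cK': "card K' = 2*m - card K" unfolding K'_def using K finK by (simp add: card_Diff_subset)
  have "x + m \<notin> K'" if x: "x \<in> K'" for x
  proof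
    assume xm: "x + m \<in> K'"
    have xr: "1 \<le> x" "x + m \<le> 2*m" "x \<notin> K" "x+m \<notin> K" using x xm unfolding K'_def by auto
    have side: "(\<forall>k\<in>K. k < w) \<or> (\<forall>k\<in>K. w < k)" if "w \<notin> K" for w
    proof (rule ccontr)
      assume "\<not> ?thesis"
      then obtain a b where ab: "a \<in> K" "b \<in> K" "\<not> a < w" "\<not> w < b" by blast
      then have "b \<le> w" "w \<le> a" by auto
      then show False using conv[OF ab(2) ab(1)] that by blast
    qed
    have "card K < m"
    proof -
      have fins: "finite {1..<x}" "finite {x<..<x+m}" "finite {x+m<..2*m}" by auto
      from side[OF xr(3)] consider (A) "\<forall>k\<in>K. k < x" | (B) "\<forall>k\<in>K. x < k" by blast
      then show ?thesis
      proof cases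
        case A
        then have "K \<subseteq> {1..<x}" using K by auto
        then have "card K \<le> card {1..<x}" by (rule card_mono[OF fins(1)])
        then show ?thesis using xr by simp
      next
        case B
        from side[OF xr(4)] consider (C) "\<forall>k\<in>K. k < x+m" | (D) "\<forall>k\<in>K. x+m < k" by blast
        then show ?thesis
        proof cases
          case C
          then have "K \<subseteq> {x<..<x+m}" using B by auto
          then have "card K \<le> card {x<..<x+m}" by (rule card_mono[OF fins(2)])
          then show ?thesis using xr by simp
        next
          case D
          then have "K \<subseteq> {x+m<..2*m}" using K by auto
          then have "card K \<le> card {x+m<..2*m}" by (rule card_mono[OF fins(3)])
          then show ?thesis using xr by simp
        qed
      qed
    qed
    then show False using False by simp
  qed
  then have "card K' \<le> card (spl m K')" using spl_nopair[of K' m] unfolding K'_def by blast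
  also have "spl m K' = spl m K" unfolding K'_def using spl_compl[OF K] .
  finally have "2*m - card K \<le> card (spl m K)" using cK' by simp
  moreover have "card K \<le> 2*m" using card_mono[OF _ K] by simp
  ultimately show ?thesis using c2 by linarith
qed

context blocks
begin

lemma conv_K:
  assumes P: "P = Zint n i j" and x: "x \<in> {k\<in>{1..2*m}. Iblock n k \<subseteq> P}" and y: "y \<in> {k\<in>{1..2*m}. Iblock n k \<subseteq> P}"
    and xz: "x \<le> z" and zy: "z \<le> y"
  shows "z \<in> {k\<in>{1..2*m}. Iblock n k \<subseteq> P}"
proof -
  have xr: "x \<in> {1..2*m}" and yr: "y \<in> {1..2*m}" using x y by auto
  have zr: "z \<in> {1..2*m}" using xr yr xz zy by auto
  have "4*x-3 \<in> Iblock n x" using Ib_eq[OF xr] xr by auto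
  then have "4*x-3 \<in> Zint n i j" using x P by auto
  then have i: "i \<le> 4*x-3" unfolding Zint_def by auto
  have "4*y \<in> Iblock n y" using Ib_eq[OF yr] by auto
  then have "4*y \<in> Zint n i j" using y P by auto
  then have j: "4*y \<le> j" unfolding Zint_def by auto
  have "Iblock n z \<subseteq> P"
  proof
    fix l assume l: "l \<in> Iblock n z"
    then have "l \<in> Zset n" using Ib_sub by auto
    moreover have "4*z-3 \<le> l" "l \<le> 4*z" using l Ib_eq[OF zr] by auto
    ultimately show "l \<in> P" unfolding P Zint_def using i j xz zy by auto
  qed
  then show ?thesis using zr by auto
qed

end

context part
begin

lemma Sp_spl: "Sp = spl m K0" unfolding Sp_def spl_def by simp

end

theorem mainTheorem15:
  fixes n m :: nat and P0 P1 :: "nat set" and R :: "nat set set"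
  assumes "4 dvd n" and "m = n div 4"
    and "neat_partition n m P0 P1"
    and "ordered_partition n P0 P1"
    and "balanced_partition n P0 P1"
    and "rectangle P0 P1 R"
  shows "\<bar>real (card (R \<inter> Aset n m)) - real (card (R \<inter> Bset n m))\<bar> \<le> 2 powr (10 * real m / 3)"
proof -
  have n: "n = 4*m" using assms(1,2) by auto
  interpret blocks n m by unfold_locales (fact n)
  interpret part n m P0 P1
    by unfold_locales (use assms(3) in \<open>auto simp: neat_partition_def is_partition_def\<close>)
  obtain S T where S: "S \<subseteq> Pow P0" and T: "T \<subseteq> Pow P1" and R: "R = {U \<union> V | U V. U \<in> S \<and> V \<in> T}"
    using assms(6) unfolding rectangle_def by blast
  define G where "G \<equiv> {g\<in>G0. g ` K0 \<in> S}"
  define H where "H \<equiv> {h\<in>H0. h ` K1 \<in> T}"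
  have RL: "R \<inter> Lset n m = (\<lambda>(g,h). mg g h ` {1..2*m}) ` (G \<times> H)"
    and inj: "inj_on (\<lambda>(g,h). mg g h ` {1..2*m}) (G \<times> H)"
    using reduce[OF S T R] unfolding G_def H_def by auto
  have GH: "G \<subseteq> G0" "H \<subseteq> H0" unfolding G_def H_def by auto
  have finRL: "finite (R \<inter> Lset n m)"
  proof (rule finite_subset)
    show "R \<inter> Lset n m \<subseteq> Pow (Zset n)" unfolding Lset_def by auto
    show "finite (Pow (Zset n))" unfolding Zset_def by auto
  qed
  have eA: "R \<inter> Aset n m = {W\<in>R \<inter> Lset n m. odd (cnt W)}" unfolding Aset_def cnt_def by auto
  have eB: "R \<inter> Bset n m = {W\<in>R \<inter> Lset n m. \<not> odd (cnt W)}" unfolding Bset_def Aset_def cnt_def by auto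
  have cf: "real (card {W\<in>R \<inter> Lset n m. P W}) = (\<Sum>W\<in>R \<inter> Lset n m. if P W then 1 else 0)" for P
  proof -
    have "real (card {W\<in>R \<inter> Lset n m. P W}) = (\<Sum>W\<in>{W\<in>R \<inter> Lset n m. P W}. 1)" by simp
    also have "\<dots> = (\<Sum>W\<in>R \<inter> Lset n m. if P W then 1 else 0)" using finRL by (rule sum.inter_filter)
    finally show ?thesis .
  qed
  have "real (card (R \<inter> Aset n m)) - real (card (R \<inter> Bset n m))
      = (\<Sum>W\<in>R \<inter> Lset n m. (if odd (cnt W) then 1 else 0) - (if \<not> odd (cnt W) then 1 else 0))"
    unfolding eA eB cf by (simp add: sum_subtractf)
  also have "\<dots> = (\<Sum>W\<in>R \<inter> Lset n m. - ((-1::real) ^ cnt W))"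
    by (intro sum.cong refl) auto
  also have "\<dots> = (\<Sum>x\<in>G \<times> H. - ((-1::real) ^ cnt ((\<lambda>(g,h). mg g h ` {1..2*m}) x)))"
    unfolding RL by (rule sum.reindex[OF inj, unfolded comp_def])
  also have "\<dots> = (\<Sum>x\<in>G \<times> H. - D (mg (fst x) (snd x)))"
  proof (rule sum.cong[OF refl])
    fix x assume x: "x \<in> G \<times> H"
    have "fst x \<in> G" "snd x \<in> H" using x by auto
    then have "fst x \<in> G0" "snd x \<in> H0" using GH by blast+
    then have mPF: "mg (fst x) (snd x) \<in> PF" by (rule mg_PF)
    have "(\<lambda>(g,h). mg g h ` {1..2*m}) x = mg (fst x) (snd x) ` {1..2*m}" by (simp add: case_prod_beta)
    then show "- ((-1::real) ^ cnt ((\<lambda>(g,h). mg g h ` {1..2*m}) x)) = - D (mg (fst x) (snd x))"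
      using cnt_cp[OF mPF] unfolding D_def by simp
  qed
  also have "\<dots> = - (\<Sum>g\<in>G. \<Sum>h\<in>H. D (mg g h))"
    by (simp add: sum.cartesian_product sum_negf case_prod_beta')
  finally have diff: "\<bar>real (card (R \<inter> Aset n m)) - real (card (R \<inter> Bset n m))\<bar> = \<bar>\<Sum>g\<in>G. \<Sum>h\<in>H. D (mg g h)\<bar>"
    by simp
  define s where "s = card Sp"
  have sK1: "s \<le> card K1" unfolding s_def by (rule card_Sp_le)
  have cK: "card K0 + card K1 = 2*m" by (rule cardK)
  define e where "e = 4*m - s"
  have "(\<Sum>g\<in>G. \<Sum>h\<in>H. D (mg g h))^2 \<le> 4^(card K0) * 4^(card K0) * 4^(card K1) * 4^(card K1 - card Sp)"
    by (rule bound[OF GH])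
  also have "\<dots> = (4::real) ^ (card K0 + card K0 + card K1 + (card K1 - s))" unfolding s_def by (simp add: power_add)
  also have "card K0 + card K0 + card K1 + (card K1 - s) = e" unfolding e_def using sK1 cK by simp
  also have "(4::real) ^ e = (2^e)^2" by (simp add: power2_eq_square flip: power_mult_distrib)
  finally have sq: "(\<Sum>g\<in>G. \<Sum>h\<in>H. D (mg g h))^2 \<le> (2^e)^2" .
  have ab: "\<bar>\<Sum>g\<in>G. \<Sum>h\<in>H. D (mg g h)\<bar> \<le> 2^e"
    using sq by (metis abs_le_square_iff abs_of_nonneg zero_le_numeral zero_le_power)
  have cP0: "card P0 = 4 * card K0" by (rule cardP0)
  have bal: "2 * real m / 3 \<le> card K0" "card K0 \<le> 4 * real m / 3"
    using assms(5) cP0 n unfolding balanced_partition_def by auto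
  have sbound: "2 * real m / 3 \<le> s"
  proof -
    obtain i j where ij: "P0 = Zint n i j \<or> P1 = Zint n i j" using assms(4) unfolding ordered_partition_def by blast
    then show ?thesis
    proof
      assume P: "P0 = Zint n i j"
      have "2 * real m / 3 \<le> card (spl m K0)"
      proof (rule spl_bound[OF K0_sub _ bal])
        fix x y z assume "x \<in> K0" "y \<in> K0" "x \<le> z" "z \<le> y"
        then show "z \<in> K0" using conv_K[OF P, of x y z] unfolding K0_def by blast
      qed
      then show ?thesis unfolding s_def Sp_spl .
    next
      assume P: "P1 = Zint n i j"
      have bal1: "2 * real m / 3 \<le> card K1" "card K1 \<le> 4 * real m / 3" using bal cK by linarith+
      have "2 * real m / 3 \<le> card (spl m K1)"
      proof (rule spl_bound[OF K1_sub _ bal1])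
        fix x y z assume "x \<in> K1" "y \<in> K1" "x \<le> z" "z \<le> y"
        then show "z \<in> K1" using conv_K[OF P, of x y z] unfolding K1_def by blast
      qed
      moreover have "spl m K1 = spl m K0" unfolding K1_eq using spl_compl[OF K0_sub] .
      ultimately show ?thesis unfolding s_def Sp_spl by simp
    qed
  qed
  have "s \<le> 2*m" using sK1 cK by simp
  then have ereal: "real e = 4 * real m - real s" unfolding e_def by simp
  have "(2::real)^e = 2 powr (real e)" by (simp add: powr_realpow)
  also have "\<dots> \<le> 2 powr (10 * real m / 3)" using sbound ereal by (intro powr_mono) auto
  finally show ?thesis using diff ab by simp
qed


end
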